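(* Let $(\mathcal{A}_G[[\lambda]],\star_G)$ be a right universal deformation of a group $G$ and let $\tau:G\times X\to X$ be a left action of $G$ on a set $X$. Define $\mathcal{A}_X$ and $\star_X$ by $(f_1\star_Xf_2)(x)=(\alpha^xf_1\star_G\alpha^xf_2)(e)$. Then: (1) $(\mathcal{A}_X[[\lambda]],\star_X)$ is an associative formal deformation of $\mathcal{A}_X$, which is Hermitian if $\star_G$ is Hermitian, and for every $x\in X$ the map $\alpha^x:(\mathcal{A}_X[[\lambda]],\star_X)\to(\mathcal{A}_G[[\lambda]],\star_G)$ is an algebra homomorphism, i.e. $\alpha^x(f_1\star_Xf_2)=\alpha^xf_1\star_G\alpha^xf_2$. (2) If $f_1\in\mathcal{A}_X[[\lambda]]$ has all coefficients constant on an orbit $G.x_0$, then $(f_1\star_Xf_2)(g.x_0)=f_1(g.x_0)f_2(g.x_0)=(f_2\star_Xf_1)(g.x_0)$ for all $f_2\in\mathcal{A}_X[[\lambda]]$ and $g\in G$; in particular, if $f_1$ is constant along every orbit, then $f_1\star_Xf_2=f_1f_2=f_2\star_Xf_1$.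
   Context: $G$ is a group with unit $e$, right translations $R_g(h)=hg$ and left translations $L_g(h)=gh$. $\mathcal A_G$ is a subalgebra of the algebra $\mathrm{Fun}(G)$ of complex-valued functions on $G$, containing $1$, closed under complex conjugation, with $R_g^*\mathcal A_G\subseteq\mathcal A_G$ for all $g$. A right universal deformation is an associative $\mathbb C[[\lambda]]$-bilinear product $\star_G$ on $\mathcal A_G[[\lambda]]$ whose zeroth order is the pointwise product, with $1\star_Gf=f=f\star_G1$, and such that $R_g^*(f_1\star_Gf_2)=R_g^*f_1\star_GR_g^*f_2$ for all $g\in G$. It is Hermitian if $\overline{f_1\star_Gf_2}=\overline{f_2}\star_G\overline{f_1}$ ($\lambda$ real). For the action write $g.x=\tau(g,x)$, $\tau_g=\tau(g,\cdot)$, and define $\alpha^x:\mathrm{Fun}(X)\to\mathrm{Fun}(G)$ by $(\alpha^xf)(g)=f(g.x)=(\tau_g^*f)(x)$, extended $\mathbb C[[\lambda]]$-linearly. $\mathcal A_X=\{f\in\mathrm{Fun}(X):\alpha^xf\in\mathcal A_G\text{ for all }x\in X\}$. *)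

theory Defs
  imports Complex_Main
begin

class mgroup = monoid_mult + inverse +
  assumes mgroup_left_inverse: "inverse a * a = 1"

text \<open>Formal power series with coefficients in functions on a set:
  a series F in Fun(S)[[lambda]] is its coefficient sequence F n :: S => complex.\<close>
type_synonym 'a fser = "nat \<Rightarrow> 'a \<Rightarrow> complex"

definition ser_in :: "('a \<Rightarrow> complex) set \<Rightarrow> 'a fser set" where
  "ser_in A = {F. \<forall>n. F n \<in> A}"

definition ser_add :: "'a fser \<Rightarrow> 'a fser \<Rightarrow> 'a fser" where
  "ser_add F H = (\<lambda>n p. F n p + H n p)"

definition ser_smult :: "(nat \<Rightarrow> complex) \<Rightarrow> 'a fser \<Rightarrow> 'a fser" where
  "ser_smult c F = (\<lambda>n p. \<Sum>k\<le>n. c k * F (n - k) p)"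

definition ser_mult :: "'a fser \<Rightarrow> 'a fser \<Rightarrow> 'a fser" where
  "ser_mult F H = (\<lambda>n p. \<Sum>k\<le>n. F k p * H (n - k) p)"

definition ser_one :: "'a fser" where
  "ser_one = (\<lambda>n p. if n = 0 then 1 else 0)"

text \<open>Complex conjugation (lambda real).\<close>
definition ser_cnj :: "'a fser \<Rightarrow> 'a fser" where
  "ser_cnj F = (\<lambda>n p. cnj (F n p))"

definition subalgebra :: "('a \<Rightarrow> complex) set \<Rightarrow> bool" where
  "subalgebra A \<longleftrightarrow> (\<lambda>_. 1) \<in> A
     \<and> (\<forall>f\<in>A. \<forall>h\<in>A. (\<lambda>p. f p + h p) \<in> A \<and> (\<lambda>p. f p * h p) \<in> A)
     \<and> (\<forall>c f. f \<in> A \<longrightarrow> (\<lambda>p. c * f p) \<in> A)"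

definition formal_deformation :: "('a \<Rightarrow> complex) set \<Rightarrow> ('a fser \<Rightarrow> 'a fser \<Rightarrow> 'a fser) \<Rightarrow> bool" where
  "formal_deformation A star \<longleftrightarrow> subalgebra A
    \<and> (\<forall>F\<in>ser_in A. \<forall>H\<in>ser_in A. star F H \<in> ser_in A)
    \<and> (\<forall>F\<in>ser_in A. \<forall>F'\<in>ser_in A. \<forall>H\<in>ser_in A.
         star (ser_add F F') H = ser_add (star F H) (star F' H)
       \<and> star H (ser_add F F') = ser_add (star H F) (star H F'))
    \<and> (\<forall>c. \<forall>F\<in>ser_in A. \<forall>H\<in>ser_in A.
         star (ser_smult c F) H = ser_smult c (star F H)
       \<and> star H (ser_smult c F) = ser_smult c (star H F))
    \<and> (\<forall>F\<in>ser_in A. \<forall>H\<in>ser_in A. star F H 0 = (\<lambda>p. F 0 p * H 0 p))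
    \<and> (\<forall>F\<in>ser_in A. \<forall>H\<in>ser_in A. \<forall>K\<in>ser_in A. star (star F H) K = star F (star H K))
    \<and> (\<forall>F\<in>ser_in A. star ser_one F = F \<and> star F ser_one = F)"

definition hermitian :: "('a \<Rightarrow> complex) set \<Rightarrow> ('a fser \<Rightarrow> 'a fser \<Rightarrow> 'a fser) \<Rightarrow> bool" where
  "hermitian A star \<longleftrightarrow>
     (\<forall>F\<in>ser_in A. \<forall>H\<in>ser_in A. ser_cnj (star F H) = star (ser_cnj H) (ser_cnj F))"

definition Rpull :: "'g::mgroup \<Rightarrow> 'g fser \<Rightarrow> 'g fser" where
  "Rpull g F = (\<lambda>n h. F n (h * g))"

definition right_universal_deformation ::
  "('g::mgroup \<Rightarrow> complex) set \<Rightarrow> ('g fser \<Rightarrow> 'g fser \<Rightarrow> 'g fser) \<Rightarrow> bool" where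
  "right_universal_deformation A star \<longleftrightarrow>
     subalgebra A
     \<and> (\<forall>f\<in>A. (\<lambda>p. cnj (f p)) \<in> A)
     \<and> (\<forall>g. \<forall>f\<in>A. (\<lambda>h. f (h * g)) \<in> A)
     \<and> formal_deformation A star
     \<and> (\<forall>g. \<forall>F\<in>ser_in A. \<forall>H\<in>ser_in A. Rpull g (star F H) = star (Rpull g F) (Rpull g H))"

definition left_action :: "('g::mgroup \<Rightarrow> 'x \<Rightarrow> 'x) \<Rightarrow> bool" where
  "left_action tau \<longleftrightarrow> (\<forall>x. tau 1 x = x) \<and> (\<forall>g h x. tau (g * h) x = tau g (tau h x))"

definition alpha :: "('g \<Rightarrow> 'x \<Rightarrow> 'x) \<Rightarrow> 'x \<Rightarrow> 'x fser \<Rightarrow> 'g fser" where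
  "alpha tau x F = (\<lambda>n g. F n (tau g x))"

definition AX :: "('g \<Rightarrow> complex) set \<Rightarrow> ('g \<Rightarrow> 'x \<Rightarrow> 'x) \<Rightarrow> ('x \<Rightarrow> complex) set" where
  "AX AG tau = {f. \<forall>x. (\<lambda>g. f (tau g x)) \<in> AG}"

definition starX :: "('g::mgroup fser \<Rightarrow> 'g fser \<Rightarrow> 'g fser) \<Rightarrow> ('g \<Rightarrow> 'x \<Rightarrow> 'x)
    \<Rightarrow> 'x fser \<Rightarrow> 'x fser \<Rightarrow> 'x fser" where
  "starX starG tau F H = (\<lambda>n x. starG (alpha tau x F) (alpha tau x H) n 1)"

end

theory Submission
  imports Defs
begin

lemma alpha_in: "F \<in> ser_in (AX AG tau) \<Longrightarrow> alpha tau x F \<in> ser_in AG"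
  by (simp add: ser_in_def AX_def alpha_def)

lemma alpha_shift: "left_action tau \<Longrightarrow> alpha tau (tau g x) F = Rpull g (alpha tau x F)"
  by (simp add: alpha_def Rpull_def left_action_def)

lemma hom:
  assumes R: "right_universal_deformation AG starG" and L: "left_action tau"
    and F: "F \<in> ser_in (AX AG tau)" and H: "H \<in> ser_in (AX AG tau)"
  shows "alpha tau x (starX starG tau F H) = starG (alpha tau x F) (alpha tau x H)"
proof (rule ext, rule ext)
  fix n g
  have RP: "Rpull g (starG (alpha tau x F) (alpha tau x H))
     = starG (Rpull g (alpha tau x F)) (Rpull g (alpha tau x H))"
    using R alpha_in[OF F] alpha_in[OF H] unfolding right_universal_deformation_def by blast
  have "alpha tau x (starX starG tau F H) n g
     = starG (alpha tau (tau g x) F) (alpha tau (tau g x) H) n 1"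
    by (simp add: alpha_def starX_def)
  also have "\<dots> = starG (Rpull g (alpha tau x F)) (Rpull g (alpha tau x H)) n 1"
    by (simp add: alpha_shift[OF L])
  also have "\<dots> = Rpull g (starG (alpha tau x F) (alpha tau x H)) n 1" using RP by simp
  also have "\<dots> = starG (alpha tau x F) (alpha tau x H) n g" by (simp add: Rpull_def)
  finally show "alpha tau x (starX starG tau F H) n g = starG (alpha tau x F) (alpha tau x H) n g" .
qed

lemma starX_alpha: "starX starG tau F H n x = starG (alpha tau x F) (alpha tau x H) n 1"
  by (simp add: starX_def)

lemma alpha_add: "alpha tau x (ser_add F H) = ser_add (alpha tau x F) (alpha tau x H)"
  by (simp add: alpha_def ser_add_def)

lemma alpha_smult: "alpha tau x (ser_smult c F) = ser_smult c (alpha tau x F)"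
  by (simp add: alpha_def ser_smult_def)

lemma alpha_one: "alpha tau x ser_one = ser_one"
  by (simp add: alpha_def ser_one_def)

lemma alpha_cnj: "alpha tau x (ser_cnj F) = ser_cnj (alpha tau x F)"
  by (simp add: alpha_def ser_cnj_def)

lemma one_in: "subalgebra A \<Longrightarrow> ser_one \<in> ser_in A"
proof -
  assume S: "subalgebra A"
  have 1: "(\<lambda>_. 1) \<in> A" using S by (simp add: subalgebra_def)
  have "(\<lambda>p. 0 * (\<lambda>_. 1) p) \<in> A" using S 1 unfolding subalgebra_def by blast
  hence 0: "(\<lambda>_. 0) \<in> A" by simp
  show ?thesis using 0 1 by (simp add: ser_in_def ser_one_def)
qed

lemma smult_one: "ser_smult c ser_one = (\<lambda>n p. c n)"
proof (rule ext, rule ext)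
  fix n p
  have "ser_smult c ser_one n p = (\<Sum>k\<le>n. if k = n then c k else 0)"
    unfolding ser_smult_def ser_one_def by (rule sum.cong) auto
  also have "\<dots> = c n" by simp
  finally show "ser_smult c ser_one n p = c n" .
qed

lemma const_left:
  assumes D: "formal_deformation A star" and B: "B \<in> ser_in A"
  shows "star (\<lambda>n p. c n) B = ser_smult c B" and "star B (\<lambda>n p. c n) = ser_smult c B"
proof -
  have S: "subalgebra A" using D by (simp add: formal_deformation_def)
  have O: "ser_one \<in> ser_in A" using one_in[OF S] .
  have u: "star ser_one B = B" "star B ser_one = B" using D B by (auto simp: formal_deformation_def)
  have "star (ser_smult c ser_one) B = ser_smult c (star ser_one B)"
       "star B (ser_smult c ser_one) = ser_smult c (star B ser_one)"
    using D B O unfolding formal_deformation_def by blast+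
  thus "star (\<lambda>n p. c n) B = ser_smult c B" "star B (\<lambda>n p. c n) = ser_smult c B"
    using u by (simp_all add: smult_one)
qed

theorem proposition7p1:
  fixes AG :: "('g::mgroup \<Rightarrow> complex) set"
    and starG :: "'g fser \<Rightarrow> 'g fser \<Rightarrow> 'g fser"
    and tau :: "'g \<Rightarrow> 'x \<Rightarrow> 'x"
  assumes "right_universal_deformation AG starG"
    and "left_action tau"
  shows "formal_deformation (AX AG tau) (starX starG tau)
    \<and> (hermitian AG starG \<longrightarrow> hermitian (AX AG tau) (starX starG tau))
    \<and> (\<forall>x. \<forall>F\<in>ser_in (AX AG tau). \<forall>H\<in>ser_in (AX AG tau).
           alpha tau x (starX starG tau F H) = starG (alpha tau x F) (alpha tau x H))
    \<and> (\<forall>x0. \<forall>F\<in>ser_in (AX AG tau). (\<forall>n g. F n (tau g x0) = F n x0) \<longrightarrow>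
           (\<forall>H\<in>ser_in (AX AG tau). \<forall>g n.
              starX starG tau F H n (tau g x0) = ser_mult F H n (tau g x0)
            \<and> starX starG tau H F n (tau g x0) = ser_mult F H n (tau g x0)))
    \<and> (\<forall>F\<in>ser_in (AX AG tau). (\<forall>x n g. F n (tau g x) = F n x) \<longrightarrow>
           (\<forall>H\<in>ser_in (AX AG tau).
              starX starG tau F H = ser_mult F H \<and> starX starG tau H F = ser_mult F H))"
proof -
  note R = assms(1) and L = assms(2)
  have SG: "subalgebra AG" and DG: "formal_deformation AG starG"
    using R by (simp_all add: right_universal_deformation_def)
  let ?A = "AX AG tau" and ?s = "starX starG tau"
  have t1: "\<And>x. tau 1 x = x" using L by (simp add: left_action_def)
  have HOM: "\<And>x F H. F \<in> ser_in ?A \<Longrightarrow> H \<in> ser_in ?A \<Longrightarrow>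
      alpha tau x (?s F H) = starG (alpha tau x F) (alpha tau x H)"
    using hom[OF R L] by blast
  have DGc: "\<forall>F\<in>ser_in AG. \<forall>H\<in>ser_in AG. starG F H \<in> ser_in AG"
    and DGadd: "\<forall>F\<in>ser_in AG. \<forall>F'\<in>ser_in AG. \<forall>H\<in>ser_in AG.
         starG (ser_add F F') H = ser_add (starG F H) (starG F' H)
       \<and> starG H (ser_add F F') = ser_add (starG H F) (starG H F')"
    and DGsm: "\<forall>c. \<forall>F\<in>ser_in AG. \<forall>H\<in>ser_in AG.
         starG (ser_smult c F) H = ser_smult c (starG F H)
       \<and> starG H (ser_smult c F) = ser_smult c (starG H F)"
    and DG0: "\<forall>F\<in>ser_in AG. \<forall>H\<in>ser_in AG. starG F H 0 = (\<lambda>p. F 0 p * H 0 p)"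
    and DGas: "\<forall>F\<in>ser_in AG. \<forall>H\<in>ser_in AG. \<forall>K\<in>ser_in AG. starG (starG F H) K = starG F (starG H K)"
    and DGu: "\<forall>F\<in>ser_in AG. starG ser_one F = F \<and> starG F ser_one = F"
    using DG unfolding formal_deformation_def by blast+
  have CL: "?s F H \<in> ser_in ?A" if F: "F \<in> ser_in ?A" and H: "H \<in> ser_in ?A" for F H
      unfolding ser_in_def AX_def
    proof (intro CollectI allI)
      fix n x
      have "alpha tau x (?s F H) \<in> ser_in AG"
        using HOM[OF F H] DGc alpha_in[OF F] alpha_in[OF H] by simp
      thus "(\<lambda>g. ?s F H n (tau g x)) \<in> AG" by (simp add: ser_in_def alpha_def)
    qed
  have P1: "formal_deformation ?A ?s"
    unfolding formal_deformation_def
  proof (intro conjI ballI allI)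
    show "subalgebra ?A" using SG unfolding subalgebra_def AX_def by auto
  next
    fix F H assume F: "F \<in> ser_in ?A" and H: "H \<in> ser_in ?A"
    show "?s F H \<in> ser_in ?A" using CL[OF F H] .
    show "?s F H 0 = (\<lambda>p. F 0 p * H 0 p)"
      using DG0 alpha_in[OF F] alpha_in[OF H] by (auto simp: starX_def alpha_def t1)
  next
    fix F F' H assume F: "F \<in> ser_in ?A" and F': "F' \<in> ser_in ?A" and H: "H \<in> ser_in ?A"
    have e1: "\<And>x. starG (ser_add (alpha tau x F) (alpha tau x F')) (alpha tau x H)
       = ser_add (starG (alpha tau x F) (alpha tau x H)) (starG (alpha tau x F') (alpha tau x H))"
     and e2: "\<And>x. starG (alpha tau x H) (ser_add (alpha tau x F) (alpha tau x F'))
       = ser_add (starG (alpha tau x H) (alpha tau x F)) (starG (alpha tau x H) (alpha tau x F'))"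
      using DGadd alpha_in[OF F] alpha_in[OF F'] alpha_in[OF H] by meson+
    show "?s (ser_add F F') H = ser_add (?s F H) (?s F' H)"
      by (intro ext) (simp only: starX_alpha alpha_add e1, simp add: ser_add_def starX_alpha)
    show "?s H (ser_add F F') = ser_add (?s H F) (?s H F')"
      by (intro ext) (simp only: starX_alpha alpha_add e2, simp add: ser_add_def starX_alpha)
  next
    fix c F H assume F: "F \<in> ser_in ?A" and H: "H \<in> ser_in ?A"
    have e1: "\<And>x. starG (ser_smult c (alpha tau x F)) (alpha tau x H)
       = ser_smult c (starG (alpha tau x F) (alpha tau x H))"
     and e2: "\<And>x. starG (alpha tau x H) (ser_smult c (alpha tau x F))
       = ser_smult c (starG (alpha tau x H) (alpha tau x F))"
      using DGsm alpha_in[OF F] alpha_in[OF H] by meson+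
    show "?s (ser_smult c F) H = ser_smult c (?s F H)"
      by (intro ext) (simp only: starX_alpha alpha_smult e1, simp add: ser_smult_def starX_alpha)
    show "?s H (ser_smult c F) = ser_smult c (?s H F)"
      by (intro ext) (simp only: starX_alpha alpha_smult e2, simp add: ser_smult_def starX_alpha)
  next
    fix F H K assume F: "F \<in> ser_in ?A" and H: "H \<in> ser_in ?A" and K: "K \<in> ser_in ?A"
    show "?s (?s F H) K = ?s F (?s H K)"
      by (intro ext) (simp only: starX_alpha HOM[OF F H] HOM[OF H K],
        use DGas alpha_in[OF F] alpha_in[OF H] alpha_in[OF K] in simp)
  next
    fix F assume F: "F \<in> ser_in ?A"
      have u: "\<And>x. starG ser_one (alpha tau x F) = alpha tau x F \<and> starG (alpha tau x F) ser_one = alpha tau x F"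
        using DGu alpha_in[OF F] by blast
      show "?s ser_one F = F"
        by (intro ext) (simp only: starX_alpha alpha_one u, simp add: alpha_def t1)
      show "?s F ser_one = F"
        by (intro ext) (simp only: starX_alpha alpha_one u, simp add: alpha_def t1)
  qed
  have P2: "hermitian AG starG \<longrightarrow> hermitian ?A ?s"
  proof
    assume HG: "hermitian AG starG"
    show "hermitian ?A ?s" unfolding hermitian_def
    proof (intro ballI)
      fix F H assume F: "F \<in> ser_in ?A" and H: "H \<in> ser_in ?A"
      have e: "\<And>x. ser_cnj (starG (alpha tau x F) (alpha tau x H))
          = starG (ser_cnj (alpha tau x H)) (ser_cnj (alpha tau x F))"
        using HG alpha_in[OF F] alpha_in[OF H] unfolding hermitian_def by blast
      show "ser_cnj (?s F H) = ?s (ser_cnj H) (ser_cnj F)"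
      proof (intro ext)
        fix n x
        have "ser_cnj (?s F H) n x = ser_cnj (starG (alpha tau x F) (alpha tau x H)) n 1"
          by (simp add: ser_cnj_def starX_alpha)
        also have "\<dots> = ?s (ser_cnj H) (ser_cnj F) n x"
          by (simp only: e starX_alpha alpha_cnj)
        finally show "ser_cnj (?s F H) n x = ?s (ser_cnj H) (ser_cnj F) n x" .
      qed
    qed
  qed
  have P4: "\<forall>x0. \<forall>F\<in>ser_in ?A. (\<forall>n g. F n (tau g x0) = F n x0) \<longrightarrow>
           (\<forall>H\<in>ser_in ?A. \<forall>g n.
              ?s F H n (tau g x0) = ser_mult F H n (tau g x0)
            \<and> ?s H F n (tau g x0) = ser_mult F H n (tau g x0))"
  proof (intro allI ballI impI)
    fix x0 F H g n
    assume F: "F \<in> ser_in ?A" and C: "\<forall>n g. F n (tau g x0) = F n x0" and H: "H \<in> ser_in ?A"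
    have aF: "alpha tau (tau g x0) F = (\<lambda>n p. F n x0)"
    proof (intro ext)
      fix m h
      have "F m (tau h (tau g x0)) = F m (tau (h * g) x0)" using L by (simp add: left_action_def)
      thus "alpha tau (tau g x0) F m h = F m x0" using C by (simp add: alpha_def)
    qed
    have aH: "alpha tau (tau g x0) H \<in> ser_in AG" using alpha_in[OF H] .
    have sm: "ser_smult (\<lambda>n. F n x0) (alpha tau (tau g x0) H) n 1 = ser_mult F H n (tau g x0)"
      using C by (simp add: ser_smult_def ser_mult_def alpha_def t1)
    show "?s F H n (tau g x0) = ser_mult F H n (tau g x0)
            \<and> ?s H F n (tau g x0) = ser_mult F H n (tau g x0)"
      using const_left[OF DG aH, of "\<lambda>n. F n x0"] sm by (simp add: starX_alpha aF)
  qed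
  have P5: "\<forall>F\<in>ser_in ?A. (\<forall>x n g. F n (tau g x) = F n x) \<longrightarrow>
           (\<forall>H\<in>ser_in ?A. ?s F H = ser_mult F H \<and> ?s H F = ser_mult F H)"
  proof (intro ballI impI)
    fix F H assume F: "F \<in> ser_in ?A" and C: "\<forall>x n g. F n (tau g x) = F n x" and H: "H \<in> ser_in ?A"
    have "?s F H n x = ser_mult F H n x \<and> ?s H F n x = ser_mult F H n x" for n x
      using P4 F C H t1 by metis
    thus "?s F H = ser_mult F H \<and> ?s H F = ser_mult F H" by auto
  qed
  show ?thesis using P1 P2 P4 P5 HOM by blast
qed

end
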